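(* For every $n\ge3$, the line graph of the $n$-cube $Q_n$ does not admit perfect state transfer between any two distinct vertices with respect to its adjacency matrix.
   Context: The $n$-cube has vertex set $\{0,1\}^n$, two vertices adjacent iff they differ in exactly one coordinate. The line graph of $X$ has vertex set $E(X)$, edges adjacent iff they share an endpoint. Perfect state transfer from vertex $x$ to vertex $y$ with Hamiltonian $M$: $e^{-\mathrm{i}\tau M}\mathbf e_x=\eta\mathbf e_y$ for some $\tau>0$, $|\eta|=1$. *)

theory Defs
  imports Complex_Main
begin

definition mat_one :: "'a \<Rightarrow> 'a \<Rightarrow> complex" where
  "mat_one x y = (if x = y then 1 else 0)"

fun mat_pow :: "'a set \<Rightarrow> ('a \<Rightarrow> 'a \<Rightarrow> complex) \<Rightarrow> nat \<Rightarrow> 'a \<Rightarrow> 'a \<Rightarrow> complex" where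
  "mat_pow V M 0 = mat_one"
| "mat_pow V M (Suc k) = (\<lambda>x y. \<Sum>z\<in>V. M x z * mat_pow V M k z y)"

definition mat_exp :: "'a set \<Rightarrow> ('a \<Rightarrow> 'a \<Rightarrow> complex) \<Rightarrow> 'a \<Rightarrow> 'a \<Rightarrow> complex" where
  "mat_exp V M x y = (\<Sum>k. mat_pow V M k x y / of_nat (fact k))"

(* perfect state transfer from x to y w.r.t. Hamiltonian H on vertex set V:
   exp(-i tau H) e_x = eta e_y for some tau > 0, |eta| = 1 *)
definition perfect_state_transfer ::
  "'a set \<Rightarrow> ('a \<Rightarrow> 'a \<Rightarrow> complex) \<Rightarrow> 'a \<Rightarrow> 'a \<Rightarrow> bool" where
  "perfect_state_transfer V H x y \<longleftrightarrow>
     (\<exists>\<tau>::real. \<tau> > 0 \<and> (\<exists>\<eta>::complex. cmod \<eta> = 1 \<and>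
        (\<forall>z\<in>V. mat_exp V (\<lambda>a b. - \<i> * of_real \<tau> * H a b) z x = \<eta> * mat_one z y)))"

(* n-cube: vertices are subsets of {0..<n} (i.e. characteristic vectors in {0,1}^n);
   two vertices are adjacent iff they differ in exactly one coordinate. *)
definition cube_vertices :: "nat \<Rightarrow> nat set set" where
  "cube_vertices n = Pow {0..<n}"

definition cube_adj :: "nat set \<Rightarrow> nat set \<Rightarrow> bool" where
  "cube_adj S T \<longleftrightarrow> card ((S - T) \<union> (T - S)) = 1"

definition cube_edges :: "nat \<Rightarrow> nat set set set" where
  "cube_edges n = {{S, T} | S T. S \<in> cube_vertices n \<and> T \<in> cube_vertices n \<and> cube_adj S T}"

definition line_adj :: "'a set \<Rightarrow> 'a set \<Rightarrow> bool" where
  "line_adj e f \<longleftrightarrow> e \<noteq> f \<and> e \<inter> f \<noteq> {}"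

definition line_adjacency_matrix :: "'a set \<Rightarrow> 'a set \<Rightarrow> complex" where
  "line_adjacency_matrix e f = (if line_adj e f then 1 else 0)"

end

theory Submission imports Defs begin

lemma mat_pow_bound:
  assumes fin: "finite V" and m: "\<And>x y. cmod (M x y) \<le> m" and m0: "0 \<le> m"
  shows "cmod (mat_pow V M k x y) \<le> (real (card V) * m) ^ k"
proof (induction k arbitrary: x y)
  case 0 then show ?case by (simp add: mat_one_def)
next
  case (Suc k)
  have "cmod (mat_pow V M (Suc k) x y) \<le> (\<Sum>z\<in>V. cmod (M x z * mat_pow V M k z y))"
    by (simp add: norm_sum)
  also have "\<dots> \<le> (\<Sum>z\<in>V. m * (real (card V) * m) ^ k)"
    apply (rule sum_mono) unfolding norm_mult
    by (rule mult_mono[OF m Suc.IH m0 norm_ge_zero])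
  also have "\<dots> = (real (card V) * m) ^ Suc k" by simp
  finally show ?case .
qed

lemma mat_exp_summable:
  assumes fin: "finite V" and m: "\<And>x y. cmod (M x y) \<le> m" and m0: "0 \<le> m"
  shows "summable (\<lambda>k. mat_pow V M k x y / of_nat (fact k))"
proof (rule summable_norm_cancel, rule summable_comparison_test)
  show "summable (\<lambda>k. inverse (fact k) * (real (card V) * m) ^ k)" by (rule summable_exp)
  show "\<exists>N. \<forall>k\<ge>N. norm (norm (mat_pow V M k x y / of_nat (fact k))) \<le> inverse (fact k) * (real (card V) * m) ^ k"
  proof (intro exI allI impI)
    fix k :: nat
    have "norm (norm (mat_pow V M k x y / of_nat (fact k))) = inverse (fact k) * cmod (mat_pow V M k x y)"
      by (simp add: norm_divide divide_inverse mult.commute norm_mult norm_inverse)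
    also have "\<dots> \<le> inverse (fact k) * (real (card V) * m) ^ k"
      by (rule mult_left_mono[OF mat_pow_bound[OF fin m m0]]) simp
    finally show "norm (norm (mat_pow V M k x y / of_nat (fact k))) \<le> inverse (fact k) * (real (card V) * m) ^ k" .
  qed
qed

lemma eig_pow:
  assumes fin: "finite V" and col: "\<And>w. w \<in> V \<Longrightarrow> (\<Sum>x\<in>V. z x * M x w) = c * z w"
    and a: "a \<in> V"
  shows "(\<Sum>x\<in>V. z x * mat_pow V M k x a) = c ^ k * z a"
proof (induction k)
  case 0 show ?case using a fin by (simp add: mat_one_def if_distrib sum.delta cong: if_cong)
next
  case (Suc k)
  have "(\<Sum>x\<in>V. z x * mat_pow V M (Suc k) x a) = (\<Sum>x\<in>V. \<Sum>w\<in>V. z x * M x w * mat_pow V M k w a)"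
    by (simp add: sum_distrib_left mult.assoc)
  also have "\<dots> = (\<Sum>w\<in>V. (\<Sum>x\<in>V. z x * M x w) * mat_pow V M k w a)"
    by (subst sum.swap) (simp add: sum_distrib_right)
  also have "\<dots> = (\<Sum>w\<in>V. c * (z w * mat_pow V M k w a))"
    by (rule sum.cong) (auto simp: col)
  also have "\<dots> = c ^ Suc k * z a" using Suc by (simp add: sum_distrib_left[symmetric])
  finally show ?case .
qed

lemma eig_exp:
  assumes fin: "finite V" and col: "\<And>w. w \<in> V \<Longrightarrow> (\<Sum>x\<in>V. z x * M x w) = c * z w"
    and a: "a \<in> V" and m: "\<And>x y. cmod (M x y) \<le> m" and m0: "0 \<le> m"
  shows "(\<Sum>x\<in>V. z x * mat_exp V M x a) = exp c * z a"
proof -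
  have s: "\<And>x. (\<lambda>k. z x * (mat_pow V M k x a / of_nat (fact k))) sums (z x * mat_exp V M x a)"
    unfolding mat_exp_def
    by (rule sums_mult, rule summable_sums, rule mat_exp_summable[OF fin m m0])
  have "(\<lambda>k. \<Sum>x\<in>V. z x * (mat_pow V M k x a / of_nat (fact k))) sums (\<Sum>x\<in>V. z x * mat_exp V M x a)"
    by (rule sums_sum, rule s)
  moreover have "(\<lambda>k. \<Sum>x\<in>V. z x * (mat_pow V M k x a / of_nat (fact k))) = (\<lambda>k. z a * (c ^ k /\<^sub>R fact k))"
  proof
    fix k
    have "(\<Sum>x\<in>V. z x * (mat_pow V M k x a / of_nat (fact k))) = (\<Sum>x\<in>V. z x * mat_pow V M k x a) / of_nat (fact k)"
      by (simp add: sum_divide_distrib)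
    also have "\<dots> = z a * (c ^ k /\<^sub>R fact k)"
      using eig_pow[OF fin col a] by (simp add: scaleR_conv_of_real divide_inverse mult.commute)
    finally show "(\<Sum>x\<in>V. z x * (mat_pow V M k x a / of_nat (fact k))) = z a * (c ^ k /\<^sub>R fact k)" .
  qed
  moreover have "(\<lambda>k. z a * (c ^ k /\<^sub>R fact k)) sums (z a * exp c)"
    by (rule sums_mult, rule exp_converges)
  ultimately show ?thesis using sums_unique2 by (metis mult.commute)
qed
lemma lam_val: "line_adjacency_matrix e w = (if e \<noteq> w \<and> e \<inter> w \<noteq> {} then 1 else 0)"
  by (simp add: line_adjacency_matrix_def line_adj_def)

lemma gen_lem: "distinct [p1,p2,p3,p4] \<Longrightarrow> R \<notin> {p1,p2,p3,p4} \<Longrightarrow>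
        (if S \<in> {p1,p2} \<or> R \<in> {p1,p2} then 1 else 0) - (if S \<in> {p2,p3} \<or> R \<in> {p2,p3} then 1 else 0)
        + (if S \<in> {p3,p4} \<or> R \<in> {p3,p4} then 1 else 0) - (if S \<in> {p4,p1} \<or> R \<in> {p4,p1} then 1 else (0::complex)) = 0"
  by (cases "S = p1"; cases "S = p2"; cases "S = p3"; cases "S = p4") simp_all

lemma gen_lem2: "distinct [p1,p2,p3,p4] \<Longrightarrow> R \<notin> {p1,p2,p3,p4} \<Longrightarrow>
        (if R \<in> {p1,p2} \<or> S \<in> {p1,p2} then 1 else 0) - (if R \<in> {p2,p3} \<or> S \<in> {p2,p3} then 1 else 0)
        + (if R \<in> {p3,p4} \<or> S \<in> {p3,p4} then 1 else 0) - (if R \<in> {p4,p1} \<or> S \<in> {p4,p1} then 1 else (0::complex)) = 0"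
  by (cases "S = p1"; cases "S = p2"; cases "S = p3"; cases "S = p4") simp_all

lemma key_lam: "e \<noteq> w \<Longrightarrow> w = {P,Q} \<Longrightarrow> line_adjacency_matrix e w = (if P \<in> e \<or> Q \<in> e then 1 else 0)"
proof -
  assume "e \<noteq> w" "w = {P,Q}"
  moreover have "e \<inter> {P,Q} \<noteq> {} \<longleftrightarrow> P \<in> e \<or> Q \<in> e" by blast
  ultimately show ?thesis by (simp add: lam_val)
qed

lemma square_eig:
  fixes p1 p2 p3 p4 :: 'a
  assumes dist: "distinct [p1,p2,p3,p4]"
    and edges: "\<forall>w\<in>V. \<exists>P Q. w = {P,Q} \<and> P \<noteq> Q"
    and nodiag: "\<forall>w\<in>V. w \<subseteq> {p1,p2,p3,p4} \<longrightarrow> w \<in> {{p1,p2},{p2,p3},{p3,p4},{p4,p1}}"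
    and inV: "{p1,p2} \<in> V" "{p2,p3} \<in> V" "{p3,p4} \<in> V" "{p4,p1} \<in> V"
    and fin: "finite V" and w: "w \<in> V"
    and zdef: "z = (\<lambda>x. if x={p1,p2} then 1 else if x={p2,p3} then -1 else if x={p3,p4} then 1 else if x={p4,p1} then -1 else (0::complex))"
  shows "(\<Sum>x\<in>V. z x * line_adjacency_matrix x w) = -2 * z w"
proof -
  let ?E = "{{p1,p2},{p2,p3},{p3,p4},{p4,p1}}"
  have ne: "{p1,p2} \<noteq> {p2,p3}" "{p1,p2} \<noteq> {p3,p4}" "{p1,p2} \<noteq> {p4,p1}"
     "{p2,p3} \<noteq> {p3,p4}" "{p2,p3} \<noteq> {p4,p1}" "{p3,p4} \<noteq> {p4,p1}"
    using dist by (auto simp: doubleton_eq_iff)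
  have dd: "p1 \<noteq> p2" "p1 \<noteq> p3" "p1 \<noteq> p4" "p2 \<noteq> p3" "p2 \<noteq> p4" "p3 \<noteq> p4"
     "p2 \<noteq> p1" "p3 \<noteq> p1" "p4 \<noteq> p1" "p3 \<noteq> p2" "p4 \<noteq> p2" "p4 \<noteq> p3" using dist by auto
  have "(\<Sum>x\<in>V. z x * line_adjacency_matrix x w) = (\<Sum>x\<in>?E. z x * line_adjacency_matrix x w)"
    by (rule sum.mono_neutral_right[OF fin]) (use inV zdef in auto)
  also have "\<dots> = line_adjacency_matrix {p1,p2} w - line_adjacency_matrix {p2,p3} w
      + line_adjacency_matrix {p3,p4} w - line_adjacency_matrix {p4,p1} w"
    using ne by (simp add: zdef ne ne[symmetric])
  also have "\<dots> = -2 * z w"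
  proof -
    obtain P Q where PQ: "w = {P,Q}" "P \<noteq> Q" using edges w by blast
    show ?thesis
    proof (cases "w \<in> ?E")
      case True
      then consider "w = {p1,p2}" | "w = {p2,p3}" | "w = {p3,p4}" | "w = {p4,p1}" by blast
      then show ?thesis
      proof cases
        case 1 then show ?thesis using dist ne ne[symmetric] by (simp add: zdef lam_val dd)
      next
        case 2 then show ?thesis using dist ne ne[symmetric] by (simp add: zdef lam_val dd)
      next
        case 3 then show ?thesis using dist ne ne[symmetric] by (simp add: zdef lam_val dd)
      next
        case 4 then show ?thesis using dist ne ne[symmetric] by (simp add: zdef lam_val dd)
      qed
    next
      case False
      have nd: "\<not> (P \<in> {p1,p2,p3,p4} \<and> Q \<in> {p1,p2,p3,p4})"
      proof
        assume h: "P \<in> {p1,p2,p3,p4} \<and> Q \<in> {p1,p2,p3,p4}"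
        then have "w \<subseteq> {p1,p2,p3,p4}" using PQ(1) by simp
        then show False using nodiag w False by blast
      qed
      have zw: "z w = 0" using False unfolding zdef by (simp only: insert_iff empty_iff de_Morgan_disj if_False)
      have neq: "\<And>e. e \<in> ?E \<Longrightarrow> e \<noteq> w" using False by blast
      have k1: "line_adjacency_matrix {p1,p2} w = (if P \<in> {p1,p2} \<or> Q \<in> {p1,p2} then 1 else 0)"
        by (rule key_lam[OF neq PQ(1)]) simp
      have k2: "line_adjacency_matrix {p2,p3} w = (if P \<in> {p2,p3} \<or> Q \<in> {p2,p3} then 1 else 0)"
        by (rule key_lam[OF neq PQ(1)]) simp
      have k3: "line_adjacency_matrix {p3,p4} w = (if P \<in> {p3,p4} \<or> Q \<in> {p3,p4} then 1 else 0)"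
        by (rule key_lam[OF neq PQ(1)]) simp
      have k4: "line_adjacency_matrix {p4,p1} w = (if P \<in> {p4,p1} \<or> Q \<in> {p4,p1} then 1 else 0)"
        by (rule key_lam[OF neq PQ(1)]) simp
      have "line_adjacency_matrix {p1,p2} w - line_adjacency_matrix {p2,p3} w
      + line_adjacency_matrix {p3,p4} w - line_adjacency_matrix {p4,p1} w = 0"
      proof (cases "Q \<in> {p1,p2,p3,p4}")
        case True
        then have "P \<notin> {p1,p2,p3,p4}" using nd by blast
        from gen_lem2[OF dist this, of Q] show ?thesis unfolding k1 k2 k3 k4 .
      next
        case False
        from gen_lem[OF dist this, of P] show ?thesis unfolding k1 k2 k3 k4 .
      qed
      then show ?thesis by (simp add: zw)
    qed
  qed
  finally show ?thesis .
qed

definition sd :: "nat set \<Rightarrow> nat set \<Rightarrow> nat set" where "sd A B = (A - B) \<union> (B - A)"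

lemma sd_inj[simp]: "sd S A = sd S B \<longleftrightarrow> A = B"
  unfolding sd_def by blast
lemma sd_sd[simp]: "sd (sd S A) (sd S B) = sd A B"
  unfolding sd_def by blast
lemma sd_empty: "sd S {} = S" unfolding sd_def by blast
lemma sd_self1: "S = sd S A \<longleftrightarrow> A = {}" unfolding sd_def by blast
lemma sd_self2: "sd S A = S \<longleftrightarrow> A = {}" unfolding sd_def by blast
lemma sd_cancel: "sd S (sd S A) = A" unfolding sd_def by blast
lemma sd_sub: "S \<subseteq> X \<Longrightarrow> D \<subseteq> X \<Longrightarrow> sd S D \<subseteq> X" unfolding sd_def by blast

lemma cube_adj_sd: "cube_adj (sd S D1) (sd S D2) \<longleftrightarrow> card (sd D1 D2) = 1"
  by (simp add: cube_adj_def sd_def[symmetric])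

lemma cube_edges_pair: "w \<in> cube_edges n \<Longrightarrow> \<exists>P Q. w = {P,Q} \<and> P \<noteq> Q"
proof -
  assume "w \<in> cube_edges n"
  then obtain P Q where "w = {P,Q}" "cube_adj P Q" unfolding cube_edges_def by blast
  moreover have "P \<noteq> Q" using \<open>cube_adj P Q\<close> unfolding cube_adj_def by auto
  ultimately show ?thesis by blast
qed

lemma cube_edges_fin: "finite (cube_edges n)"
proof (rule finite_subset)
  show "cube_edges n \<subseteq> Pow (cube_vertices n)" unfolding cube_edges_def by auto
  show "finite (Pow (cube_vertices n))" unfolding cube_vertices_def by simp
qed

lemma sq_edge:
  assumes "S \<subseteq> {0..<n}" "D1 \<subseteq> {0..<n}" "D2 \<subseteq> {0..<n}" "card (sd D1 D2) = 1"
  shows "{sd S D1, sd S D2} \<in> cube_edges n"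
  unfolding cube_edges_def cube_vertices_def
  apply (rule CollectI, rule exI[of _ "sd S D1"], rule exI[of _ "sd S D2"])
  using assms sd_sub[OF assms(1) assms(2)] sd_sub[OF assms(1) assms(3)] by (simp add: cube_adj_sd)

lemma nodiag_cube:
  assumes k: "k \<noteq> i"
    and P: "P \<in> {sd S {}, sd S {i}, sd S {i,k}, sd S {k}}"
    and Q: "Q \<in> {sd S {}, sd S {i}, sd S {i,k}, sd S {k}}"
    and adj: "cube_adj P Q"
  shows "{P,Q} \<in> {{sd S {}, sd S {i}}, {sd S {i}, sd S {i,k}}, {sd S {i,k}, sd S {k}}, {sd S {k}, sd S {}}}"
proof -
  have c: "card (sd {} {i,k}) = 2" "card (sd {i} {k}) = 2" "card (sd {i,k} {}) = 2" "card (sd {k} {i}) = 2"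
      "card (sd D D) = 0" for D
      using k by (auto simp: sd_def insert_Diff_if)
  from P Q adj show ?thesis
    by (elim insertE emptyE) (simp_all add: cube_adj_sd c insert_commute)
qed

lemma no_pst_square:
  fixes S :: "nat set"
  assumes S: "S \<subseteq> {0..<n}" and i: "i < n" and k: "k < n" "k \<noteq> i"
    and f: "f \<in> cube_edges n"
    and fn: "f \<notin> {{sd S {}, sd S {i}}, {sd S {i}, sd S {i,k}}, {sd S {i,k}, sd S {k}}, {sd S {k}, sd S {}}}"
  shows "\<not> perfect_state_transfer (cube_edges n) line_adjacency_matrix {sd S {}, sd S {i}} f"
proof
  assume "perfect_state_transfer (cube_edges n) line_adjacency_matrix {sd S {}, sd S {i}} f"
  then obtain \<tau> :: real and \<eta> where tau: "\<tau> > 0" and eta: "cmod \<eta> = 1"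
    and U: "\<forall>x\<in>cube_edges n. mat_exp (cube_edges n) (\<lambda>a b. - \<i> * of_real \<tau> * line_adjacency_matrix a b) x {sd S {}, sd S {i}} = \<eta> * mat_one x f"
    unfolding perfect_state_transfer_def by blast
  define V where "V = cube_edges n"
  define p1 where "p1 = sd S {}"
  define p2 where "p2 = sd S {i}"
  define p3 where "p3 = sd S {i,k}"
  define p4 where "p4 = sd S {k}"
  define z where "z = (\<lambda>x. if x={p1,p2} then 1 else if x={p2,p3} then -1 else if x={p3,p4} then 1 else if x={p4,p1} then -1 else (0::complex))"
  define M :: "nat set set \<Rightarrow> nat set set \<Rightarrow> complex" where "M = (\<lambda>a b. - \<i> * of_real \<tau> * line_adjacency_matrix a b)"
  have fin: "finite V" unfolding V_def by (rule cube_edges_fin)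
  have dist: "distinct [p1,p2,p3,p4]" unfolding p1_def p2_def p3_def p4_def using k by auto
  have cards: "card (sd {} {i}) = 1" "card (sd {i} {i,k}) = 1" "card (sd {i,k} {k}) = 1" "card (sd {k} {}) = 1"
    using k by (auto simp: sd_def insert_Diff_if)
  have sub: "{} \<subseteq> {0..<n}" "{i} \<subseteq> {0..<n}" "{i,k} \<subseteq> {0..<n}" "{k} \<subseteq> {0..<n}" using i k by auto
  have inV: "{p1,p2} \<in> V" "{p2,p3} \<in> V" "{p3,p4} \<in> V" "{p4,p1} \<in> V"
    unfolding V_def p1_def p2_def p3_def p4_def using sq_edge[OF S] sub cards by blast+
  have edges: "\<forall>w\<in>V. \<exists>P Q. w = {P,Q} \<and> P \<noteq> Q" unfolding V_def using cube_edges_pair by blast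
  have nodiag: "\<forall>w\<in>V. w \<subseteq> {p1,p2,p3,p4} \<longrightarrow> w \<in> {{p1,p2},{p2,p3},{p3,p4},{p4,p1}}"
  proof (intro ballI impI)
    fix w assume w: "w \<in> V" and ws: "w \<subseteq> {p1,p2,p3,p4}"
    obtain P Q where PQ: "w = {P,Q}" "cube_adj P Q"
      using w unfolding V_def cube_edges_def by blast
    have "P \<in> {p1,p2,p3,p4}" "Q \<in> {p1,p2,p3,p4}" using ws PQ by auto
    from nodiag_cube[OF k(2) this[unfolded p1_def p2_def p3_def p4_def] PQ(2)]
    show "w \<in> {{p1,p2},{p2,p3},{p3,p4},{p4,p1}}" unfolding PQ(1) p1_def p2_def p3_def p4_def .
  qed
  have col: "(\<Sum>x\<in>V. z x * M x w) = (2 * \<i> * of_real \<tau>) * z w" if w: "w \<in> V" for w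
  proof -
    have "(\<Sum>x\<in>V. z x * M x w) = (- \<i> * of_real \<tau>) * (\<Sum>x\<in>V. z x * line_adjacency_matrix x w)"
      unfolding M_def by (simp add: sum_distrib_left algebra_simps)
    also have "\<dots> = (- \<i> * of_real \<tau>) * (-2 * z w)"
      using square_eig[OF dist edges nodiag inV fin w z_def] by simp
    finally show ?thesis by simp
  qed
  have bnd: "cmod (M x y) \<le> \<tau>" for x y
    using tau by (simp add: M_def line_adjacency_matrix_def norm_mult)
  have e: "{p1,p2} \<in> V" by (rule inV(1))
  have "(\<Sum>x\<in>V. z x * mat_exp V M x {p1,p2}) = exp (2 * \<i> * of_real \<tau>) * z {p1,p2}"
    by (rule eig_exp[OF fin col e bnd less_imp_le[OF tau]])
  also have "\<dots> = exp (2 * \<i> * of_real \<tau>)" unfolding z_def by simp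
  finally have l: "(\<Sum>x\<in>V. z x * mat_exp V M x {p1,p2}) = exp (2 * \<i> * of_real \<tau>)" .
  have "(\<Sum>x\<in>V. z x * mat_exp V M x {p1,p2}) = (\<Sum>x\<in>V. z x * (\<eta> * mat_one x f))"
    using U unfolding V_def M_def p1_def p2_def by simp
  also have "\<dots> = \<eta> * z f"
    using f fin unfolding V_def by (simp add: mat_one_def if_distrib sum.delta cong: if_cong)
  also have "z f = 0" using fn unfolding z_def p1_def p2_def p3_def p4_def by auto
  finally have "exp (2 * \<i> * of_real \<tau>) = (0::complex)" using l by simp
  then show False by simp
qed

lemma sq_disj:
  assumes k: "k1 \<noteq> i" "k2 \<noteq> i" "k1 \<noteq> k2"
  and f1: "f \<in> {{sd S {i}, sd S {i,k1}}, {sd S {i,k1}, sd S {k1}}, {sd S {k1}, sd S {}}}"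
  shows "f \<notin> {{sd S {}, sd S {i}}, {sd S {i}, sd S {i,k2}}, {sd S {i,k2}, sd S {k2}}, {sd S {k2}, sd S {}}}"
proof -
  have ne: "{i,k1} \<noteq> {i,k2}" "{i,k1} \<noteq> {k2}" "{k1} \<noteq> {i,k2}" "{k1} \<noteq> {k2}" "{i} \<noteq> {i,k2}" "{i,k1} \<noteq> {i}"
      "{k1} \<noteq> {i}" "{i} \<noteq> {k2}" "{i,k1} \<noteq> {}" "{k1} \<noteq> {}" "{i} \<noteq> {}" "{i,k2} \<noteq> {}" "{k2} \<noteq> {}"
    using k by (auto simp: doubleton_eq_iff)
  note ne2 = ne ne[symmetric]
  from f1 consider "f = {sd S {i}, sd S {i,k1}}" | "f = {sd S {i,k1}, sd S {k1}}" | "f = {sd S {k1}, sd S {}}" by blast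
  then show ?thesis
  proof cases
    case 1 then show ?thesis using k by (simp add: doubleton_eq_iff)
  next
    case 2 then show ?thesis using k by (simp add: doubleton_eq_iff)
  next
    case 3 then show ?thesis using k by (simp add: doubleton_eq_iff)
  qed
qed

lemma ins_ne: "x \<in> insert a X \<Longrightarrow> a \<noteq> x \<Longrightarrow> x \<in> X" by blast

lemma two_others: "(n::nat) \<ge> 3 \<Longrightarrow> i < n \<Longrightarrow> \<exists>k1 k2. k1 < n \<and> k2 < n \<and> k1 \<noteq> i \<and> k2 \<noteq> i \<and> k1 \<noteq> k2"
proof -
  assume "n \<ge> 3" "i < n"
  show ?thesis
  proof (cases "i = 0")
    case True then show ?thesis using \<open>n \<ge> 3\<close> by (intro exI[of _ 1] exI[of _ 2]) auto
  next
    case False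
    show ?thesis
    proof (cases "i = 1")
      case True then show ?thesis using \<open>n \<ge> 3\<close> by (intro exI[of _ 0] exI[of _ 2]) auto
    next
      case False then show ?thesis using \<open>n \<ge> 3\<close> \<open>i \<noteq> 0\<close> by (intro exI[of _ 0] exI[of _ 1]) auto
    qed
  qed
qed

theorem mainTheorem15:
  fixes n :: nat and e f :: "nat set set"
  assumes "n \<ge> 3"
    and "e \<in> cube_edges n" and "f \<in> cube_edges n" and "e \<noteq> f"
  shows "\<not> perfect_state_transfer (cube_edges n) line_adjacency_matrix e f"
proof -
  obtain S T where eST: "e = {S,T}" and S: "S \<subseteq> {0..<n}" and T: "T \<subseteq> {0..<n}" and adj: "card (sd S T) = 1"
    using assms(2) unfolding cube_edges_def cube_vertices_def cube_adj_def sd_def by blast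
  obtain i where i: "sd S T = {i}" using adj by (auto simp: card_1_singleton_iff)
  have "i \<in> sd S T" using i by simp
  then have il: "i < n" using S T unfolding sd_def by auto
  have Ti: "T = sd S {i}" using sd_cancel[of S T] i by simp
  have e: "e = {sd S {}, sd S {i}}" using eST Ti by (simp add: sd_empty)
  obtain k1 k2 where k: "k1 < n" "k2 < n" "k1 \<noteq> i" "k2 \<noteq> i" "k1 \<noteq> k2"
    using two_others[OF assms(1) il] by blast
  have "\<not> (f \<in> {{sd S {}, sd S {i}}, {sd S {i}, sd S {i,k1}}, {sd S {i,k1}, sd S {k1}}, {sd S {k1}, sd S {}}}
     \<and> f \<in> {{sd S {}, sd S {i}}, {sd S {i}, sd S {i,k2}}, {sd S {i,k2}, sd S {k2}}, {sd S {k2}, sd S {}}})"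
  proof
    assume h: "f \<in> {{sd S {}, sd S {i}}, {sd S {i}, sd S {i,k1}}, {sd S {i,k1}, sd S {k1}}, {sd S {k1}, sd S {}}}
     \<and> f \<in> {{sd S {}, sd S {i}}, {sd S {i}, sd S {i,k2}}, {sd S {i,k2}, sd S {k2}}, {sd S {k2}, sd S {}}}"
    have "f \<in> {{sd S {i}, sd S {i,k1}}, {sd S {i,k1}, sd S {k1}}, {sd S {k1}, sd S {}}}"
      using conjunct1[OF h] assms(4)[unfolded e] by (rule ins_ne)
    from sq_disj[OF k(3) k(4) k(5) this] conjunct2[OF h] show False by (rule notE)
  qed
  then consider "f \<notin> {{sd S {}, sd S {i}}, {sd S {i}, sd S {i,k1}}, {sd S {i,k1}, sd S {k1}}, {sd S {k1}, sd S {}}}"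
    | "f \<notin> {{sd S {}, sd S {i}}, {sd S {i}, sd S {i,k2}}, {sd S {i,k2}, sd S {k2}}, {sd S {k2}, sd S {}}}"
    by (simp only: de_Morgan_conj) (elim disjE; assumption)
  then show ?thesis
  proof cases
    case 1 show ?thesis unfolding e by (rule no_pst_square[OF S il k(1) k(3) assms(3) 1])
  next
    case 2 show ?thesis unfolding e by (rule no_pst_square[OF S il k(2) k(4) assms(3) 2])
  qed
qed

end
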